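(* Let $M\subset\mathbb{R}^{m+1}$ be an entire graphical translating soliton, i.e. the graph of a smooth function $u:\mathbb{R}^m\to\mathbb{R}$ which is a translating soliton with velocity $\operatorname{e}_{m+1}$. Suppose there are constants $C>0$, $r>0$ and $\alpha$ such that $|u(x)|\le C|x|^\alpha$ for all $x\in\mathbb{R}^m$ with $|x|\ge r$. Then $\alpha\ge2$.
   Context: A translating soliton is an oriented hypersurface whose scalar mean curvature satisfies $H=-\langle\operatorname{e}_{m+1},\xi\rangle$ ($\xi$ the unit normal), equivalently its mean curvature vector equals the normal projection of $\operatorname{e}_{m+1}$. *)

theory Defs
  imports "HOL-Analysis.Analysis"
begin

text \<open>Points of R^m are vectors of type real^'m, where 'm is a finite type with CARD('m) = m.\<close>

definition partial :: "'m::finite \<Rightarrow> (real^'m \<Rightarrow> real) \<Rightarrow> real^'m \<Rightarrow> real" where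
  "partial i f x = deriv (\<lambda>t. f (x + t *\<^sub>R axis i 1)) 0"

definition iter_partial :: "'m::finite list \<Rightarrow> (real^'m \<Rightarrow> real) \<Rightarrow> real^'m \<Rightarrow> real" where
  "iter_partial is f = foldr (\<lambda>i g. partial i g) is f"

definition smooth :: "(real^'m::finite \<Rightarrow> real) \<Rightarrow> bool" where
  "smooth f \<longleftrightarrow> (\<forall>is. (iter_partial is f) differentiable_on UNIV)"

definition grad :: "(real^'m::finite \<Rightarrow> real) \<Rightarrow> real^'m \<Rightarrow> real^'m" where
  "grad f x = (\<chi> i. partial i f x)"

definition divergence :: "(real^'m::finite \<Rightarrow> real^'m) \<Rightarrow> real^'m \<Rightarrow> real" where
  "divergence V x = (\<Sum>i\<in>UNIV. partial i (\<lambda>y. V y $ i) x)"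

text \<open>The graph of u is a translating soliton with velocity e_{m+1}:
  with upward unit normal xi = (-Du, 1)/W, W = sqrt(1+|Du|^2), the mean curvature is
  H = div(Du/W) and the condition H = <e_{m+1}, xi> reads div(Du/W) = 1/W.
  (The opposite sign convention amounts to replacing u by -u.)\<close>
definition graphical_translator :: "(real^'m::finite \<Rightarrow> real) \<Rightarrow> bool" where
  "graphical_translator u \<longleftrightarrow>
     (\<forall>x. divergence (\<lambda>y. (1 / sqrt (1 + (norm (grad u y))\<^sup>2)) *\<^sub>R grad u y) x
          = 1 / sqrt (1 + (norm (grad u x))\<^sup>2))"

end

theory Submission
  imports Defs
begin


lemma dir_chain:
  fixes g :: "real^'m::finite \<Rightarrow> real"
  assumes "g differentiable (at (y + s *\<^sub>R w))"
  shows "((\<lambda>t. g (y + t *\<^sub>R w)) has_real_derivative (\<Sum>i\<in>UNIV. w$i * partial i g (y + s *\<^sub>R w))) (at s)"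
proof -
  obtain D where D: "(g has_derivative D) (at (y + s *\<^sub>R w))"
    using assms by (auto simp: differentiable_def)
  have lin: "linear D" using D has_derivative_linear by blast
  have c: "((\<lambda>t. g (y + t *\<^sub>R w)) has_derivative (\<lambda>t. D (t *\<^sub>R w))) (at s)" if "(g has_derivative D) (at (y + s *\<^sub>R w))" for y w s
  proof -
    have "((\<lambda>t. y + t *\<^sub>R w) has_derivative (\<lambda>t. t *\<^sub>R w)) (at s)"
      by (auto intro!: derivative_eq_intros)
    from has_derivative_compose[OF this that] show ?thesis by simp
  qed
  have pd: "partial i g (y + s *\<^sub>R w) = D (axis i 1)" for i
  proof -
    have "((\<lambda>t. g ((y + s *\<^sub>R w) + t *\<^sub>R axis i 1)) has_derivative (\<lambda>t. D (t *\<^sub>R axis i 1))) (at 0)"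
      using c[of "y + s *\<^sub>R w" 0 "axis i 1"] D by simp
    moreover have "(\<lambda>t. D (t *\<^sub>R axis i 1)) = (*) (D (axis i 1))"
      using lin by (auto simp: linear_scale)
    ultimately have "((\<lambda>t. g ((y + s *\<^sub>R w) + t *\<^sub>R axis i 1)) has_real_derivative D (axis i 1)) (at 0)"
      by (simp add: has_field_derivative_def)
    then show ?thesis unfolding partial_def by (rule DERIV_imp_deriv)
  qed
  have "D w = D (\<Sum>i\<in>UNIV. w$i *\<^sub>R axis i 1)"
    using basis_expansion[of w] by (simp add: scalar_mult_eq_scaleR)
  also have "\<dots> = (\<Sum>i\<in>UNIV. w$i * D (axis i 1))"
    using lin by (simp add: linear_sum linear_scale)
  finally have Dw: "D w = (\<Sum>i\<in>UNIV. w$i * partial i g (y + s *\<^sub>R w))" by (simp add: pd)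
  have "(\<lambda>t. D (t *\<^sub>R w)) = (*) (D w)"
    using lin by (auto simp: linear_scale)
  with c[OF D] show ?thesis by (simp add: has_field_derivative_def Dw)
qed

lemma axis_deriv:
  fixes g :: "real^'m::finite \<Rightarrow> real"
  assumes "g differentiable (at y)"
  shows "((\<lambda>t. g (y + t *\<^sub>R axis i 1)) has_real_derivative partial i g y) (at 0)"
proof -
  have "((\<lambda>t. g (y + t *\<^sub>R axis i 1)) has_real_derivative (\<Sum>k\<in>UNIV. (axis i 1::real^'m)$k * partial k g (y + 0 *\<^sub>R axis i 1))) (at 0)"
    by (rule dir_chain) (use assms in simp)
  moreover have "(\<Sum>k\<in>UNIV. (axis i 1::real^'m)$k * partial k g (y + 0 *\<^sub>R axis i 1)) = partial i g y"
    by (simp add: axis_def if_distrib[where f="\<lambda>c. c * _"] cong: if_cong)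
  ultimately show ?thesis by simp
qed



lemma second_deriv_test:
  fixes h h1 :: "real \<Rightarrow> real"
  assumes d: "\<forall>t. (h has_real_derivative h1 t) (at t)"
    and d2: "(h1 has_real_derivative c) (at 0)"
    and mx: "\<forall>t. h t \<le> h 0"
  shows "c \<le> 0"
proof (rule ccontr)
  assume "\<not> c \<le> 0"
  hence c: "c > 0" by simp
  have h10: "h1 0 = 0"
    by (rule DERIV_local_max[OF d[rule_format, of 0], of 1]) (use mx in auto)
  obtain e where e: "e > 0" "\<forall>k>0. k < e \<longrightarrow> h1 0 < h1 (0 + k)"
    using DERIV_pos_inc_right[OF d2 c] by blast
  define t where "t = e / 2"
  have t: "0 < t" "t < e" using e by (auto simp: t_def)
  obtain z where z: "0 < z" "z < t" "h t - h 0 = (t - 0) * h1 z"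
    using MVT2[OF t(1), of h h1] d by auto
  have "h1 z > 0" using e(2) z t h10 by auto
  hence "h t - h 0 > 0" using z t by simp
  thus False using mx[rule_format, of t] by linarith
qed

lemma sum_two:
  fixes f :: "'n::finite \<Rightarrow> real"
  shows "(\<Sum>l\<in>UNIV. ((if l = i then a else 0) + (if l = j then b else 0)) * f l) = a * f i + b * f j"
proof -
  have "\<And>l. ((if l = i then a else 0) + (if l = j then b else 0)) * f l = (if l = i then a * f i else 0) + (if l = j then b * f j else 0)"
    by (auto simp: algebra_simps)
  then show ?thesis by (simp add: sum.distrib)
qed

lemma psd_bound:
  fixes A :: "'n::finite \<Rightarrow> 'n \<Rightarrow> real"
  assumes psd: "\<forall>w::'n\<Rightarrow>real. 0 \<le> (\<Sum>i\<in>UNIV. \<Sum>j\<in>UNIV. w i * w j * A i j)"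
  shows "(\<Sum>i\<in>UNIV. \<Sum>j\<in>UNIV. v i * v j * A i j) \<le> (\<Sum>i\<in>UNIV. (v i)\<^sup>2) * (\<Sum>i\<in>UNIV. A i i)"
proof -
  have pw: "v i * v j * (A i j + A j i) \<le> (v j)\<^sup>2 * A i i + (v i)\<^sup>2 * A j j" for i j
  proof (cases "i = j")
    case True thus ?thesis by (simp add: power2_eq_square algebra_simps)
  next
    case False
    define w where "w = (\<lambda>k. (if k = i then v j else 0) + (if k = j then - v i else 0))"
    have inner: "(\<Sum>l\<in>UNIV. w k * w l * A k l) = w k * (v j * A k i - v i * A k j)" for k
    proof -
      have "(\<Sum>l\<in>UNIV. w k * w l * A k l) = w k * (\<Sum>l\<in>UNIV. w l * A k l)"
        by (simp add: sum_distrib_left mult.assoc)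
      also have "(\<Sum>l\<in>UNIV. w l * A k l) = v j * A k i + (- v i) * A k j"
        unfolding w_def by (rule sum_two)
      finally show ?thesis by simp
    qed
    have "(\<Sum>k\<in>UNIV. \<Sum>l\<in>UNIV. w k * w l * A k l) = (\<Sum>k\<in>UNIV. w k * (v j * A k i - v i * A k j))"
      by (simp add: inner)
    also have "\<dots> = v j * (v j * A i i - v i * A i j) + (- v i) * (v j * A j i - v i * A j j)"
      unfolding w_def by (rule sum_two)
    finally have eqw: "(\<Sum>k\<in>UNIV. \<Sum>l\<in>UNIV. w k * w l * A k l) = v j * (v j * A i i - v i * A i j) + (- v i) * (v j * A j i - v i * A j j)" .
    have "0 \<le> v j * (v j * A i i - v i * A i j) - v i * (v j * A j i - v i * A j j)"
      using psd[rule_format, of w] eqw by simp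
    thus ?thesis by (simp add: power2_eq_square algebra_simps)
  qed
  define X where "X = (\<Sum>i\<in>UNIV. \<Sum>j\<in>UNIV. v i * v j * A i j)"
  define S where "S = (\<Sum>i\<in>UNIV. (v i)\<^sup>2)"
  define T where "T = (\<Sum>i\<in>UNIV. A i i)"
  have Y: "(\<Sum>i\<in>UNIV. \<Sum>j\<in>UNIV. v j * v i * A j i) = X"
    unfolding X_def by (rule sum.swap)
  have "(\<Sum>i\<in>UNIV. \<Sum>j\<in>UNIV. v i * v j * (A i j + A j i))
      = X + (\<Sum>i\<in>UNIV. \<Sum>j\<in>UNIV. v j * v i * A j i)"
    unfolding X_def by (simp add: distrib_left sum.distrib mult.commute mult.left_commute)
  hence e1: "(\<Sum>i\<in>UNIV. \<Sum>j\<in>UNIV. v i * v j * (A i j + A j i)) = 2 * X" using Y by simp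
  have e2: "(\<Sum>j\<in>UNIV. (v j)\<^sup>2 * A i i + (v i)\<^sup>2 * A j j) = S * A i i + (v i)\<^sup>2 * T" for i
  proof -
    have "(\<Sum>j\<in>UNIV. (v j)\<^sup>2 * A i i) = S * A i i" unfolding S_def by (rule sum_distrib_right[symmetric])
    moreover have "(\<Sum>j\<in>UNIV. (v i)\<^sup>2 * A j j) = (v i)\<^sup>2 * T" unfolding T_def by (rule sum_distrib_left[symmetric])
    ultimately show ?thesis by (simp add: sum.distrib)
  qed
  have "(\<Sum>i\<in>UNIV. S * A i i + (v i)\<^sup>2 * T) = S * T + S * T"
  proof -
    have "(\<Sum>i\<in>UNIV. S * A i i) = S * T" unfolding T_def by (rule sum_distrib_left[symmetric])
    moreover have "(\<Sum>i\<in>UNIV. (v i)\<^sup>2 * T) = S * T" unfolding S_def by (simp add: sum_distrib_right)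
    ultimately show ?thesis by (simp add: sum.distrib)
  qed
  hence e3: "(\<Sum>i\<in>UNIV. \<Sum>j\<in>UNIV. (v j)\<^sup>2 * A i i + (v i)\<^sup>2 * A j j) = 2 * (S * T)"
    using e2 by simp
  have "(\<Sum>i\<in>UNIV. \<Sum>j\<in>UNIV. v i * v j * (A i j + A j i)) \<le> (\<Sum>i\<in>UNIV. \<Sum>j\<in>UNIV. (v j)\<^sup>2 * A i i + (v i)\<^sup>2 * A j j)"
    by (intro sum_mono pw)
  hence "X \<le> S * T" using e1 e3 by simp
  thus ?thesis unfolding X_def S_def T_def .
qed



lemma comp_deriv:
  fixes G :: "'m::finite \<Rightarrow> real \<Rightarrow> real" and i :: 'm
  assumes d: "\<And>j. (G j has_real_derivative Dj j) (at 0)"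
  shows "((\<lambda>t. (1 / sqrt (1 + (\<Sum>j\<in>UNIV. (G j t)\<^sup>2))) * G i t) has_real_derivative
     (Dj i / sqrt (1 + (\<Sum>j\<in>UNIV. (G j 0)\<^sup>2)) - G i 0 * (\<Sum>j\<in>UNIV. G j 0 * Dj j) / (sqrt (1 + (\<Sum>j\<in>UNIV. (G j 0)\<^sup>2)))^3)) (at 0)"
proof -
  define X where "X = 1 + (\<Sum>j\<in>UNIV. (G j 0)\<^sup>2)"
  have Xp: "X > 0" unfolding X_def by (simp add: add_pos_nonneg sum_nonneg)
  have dS: "((\<lambda>t. 1 + (\<Sum>j\<in>UNIV. (G j t)\<^sup>2)) has_real_derivative (\<Sum>j\<in>UNIV. 2 * G j 0 * Dj j)) (at 0)"
    by (auto intro!: derivative_eq_intros d simp: DERIV_sum ac_simps)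
  have s: "(\<Sum>n\<in>UNIV. 2 * (Dj n * G n 0)) = 2 * (\<Sum>j\<in>UNIV. G j 0 * Dj j)"
    by (simp add: sum_distrib_left ac_simps)
  have s3: "sqrt X ^ 3 = X * sqrt X"
    using Xp by (simp add: power3_eq_cube power2_eq_square[symmetric])
  have sp: "sqrt X > 0" using Xp by simp
  show ?thesis
    using Xp unfolding X_def[symmetric]
    apply (auto intro!: derivative_eq_intros d dS simp: X_def[symmetric])
    using sp by (subst s, simp add: s3 field_simps)
qed



lemma growth:
  fixes C \<alpha> \<epsilon> K :: real
  assumes "C > 0" "\<alpha> < 2" "\<epsilon> > 0"
  shows "\<exists>T\<ge>1. \<forall>t\<ge>T. C * t powr \<alpha> - \<epsilon> * t\<^sup>2 < K"
proof -
  define \<delta> where "\<delta> = max \<alpha> 0"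
  have dl: "\<delta> < 2" "0 \<le> \<delta>" "\<alpha> \<le> \<delta>" using assms by (auto simp: \<delta>_def)
  define L where "L = (\<bar>K\<bar> + C + 1) / \<epsilon>"
  have Lp: "L > 0" using assms by (simp add: L_def)
  define T where "T = max 1 (L powr (1 / (2 - \<delta>)))"
  show ?thesis
  proof (intro exI[of _ T] conjI allI impI)
    show "1 \<le> T" by (simp add: T_def)
    fix t assume t: "T \<le> t"
    have t1: "1 \<le> t" using t by (simp add: T_def)
    have "L powr (1 / (2 - \<delta>)) \<le> t" using t by (simp add: T_def)
    hence "(L powr (1 / (2 - \<delta>))) powr (2 - \<delta>) \<le> t powr (2 - \<delta>)"
      using dl Lp by (intro powr_mono2) auto
    hence Lt: "L \<le> t powr (2 - \<delta>)" using dl Lp by (simp add: powr_powr)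
    have "\<epsilon> * L = \<bar>K\<bar> + C + 1" using assms by (simp add: L_def)
    moreover have "\<epsilon> * L \<le> \<epsilon> * t powr (2 - \<delta>)" using Lt assms(3) by (intro mult_left_mono) auto
    ultimately have eL: "\<bar>K\<bar> + C + 1 \<le> \<epsilon> * t powr (2 - \<delta>)" by linarith
    have pa: "t powr \<alpha> \<le> t powr \<delta>" using t1 dl by (intro powr_mono) auto
    have pd: "t powr \<delta> \<ge> 1" using t1 dl by (simp add: ge_one_powr_ge_zero)
    have t2: "t\<^sup>2 = t powr \<delta> * t powr (2 - \<delta>)"
      using t1 by (simp add: powr_add[symmetric] powr_numeral)
    have "C * t powr \<alpha> - \<epsilon> * t\<^sup>2 \<le> C * t powr \<delta> - \<epsilon> * t\<^sup>2"
      using pa assms by simp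
    also have "\<dots> = t powr \<delta> * (C - \<epsilon> * t powr (2 - \<delta>))" by (simp add: t2 algebra_simps)
    also have "\<dots> \<le> t powr \<delta> * (- \<bar>K\<bar> - 1)" using eL pd by (intro mult_left_mono) auto
    also have "\<dots> \<le> 1 * (- \<bar>K\<bar> - 1)" using pd by (intro mult_right_mono_neg) auto
    also have "\<dots> < K" by simp
    finally show "C * t powr \<alpha> - \<epsilon> * t\<^sup>2 < K" .
  qed
qed

lemma attains_max:
  fixes f :: "real^'m::finite \<Rightarrow> real"
  assumes "continuous_on UNIV f" "\<forall>x. norm x \<ge> R \<longrightarrow> f x < f 0"
  shows "\<exists>x0. \<forall>x. f x \<le> f x0"
proof -
  obtain x0 where x0: "x0 \<in> cball 0 \<bar>R\<bar>" "\<forall>y\<in>cball 0 \<bar>R\<bar>. f y \<le> f x0"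
  proof -
    have "continuous_on (cball 0 \<bar>R\<bar>) f" using assms(1) by (rule continuous_on_subset) simp
    from continuous_attains_sup[OF compact_cball _ this] show ?thesis using that by auto
  qed
  have "f 0 \<le> f x0" using x0 by simp
  show ?thesis
  proof (intro exI allI)
    fix x
    show "f x \<le> f x0"
    proof (cases "norm x \<le> \<bar>R\<bar>")
      case True thus ?thesis using x0 by simp
    next
      case False
      hence "R \<le> norm x" by linarith
      hence "f x < f 0" using assms(2) by blast
      thus ?thesis using \<open>f 0 \<le> f x0\<close> by linarith
    qed
  qed
qed


lemma t1: fixes A :: "'n::finite \<Rightarrow> 'n \<Rightarrow> real"
  shows "(\<Sum>k\<in>UNIV. \<Sum>l\<in>UNIV. (if k = i then 1 else 0) * (if l = i then 1 else 0) * A k l) = A i i"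
proof -
  have "\<And>k. (\<Sum>l\<in>UNIV. (if k = i then 1 else 0) * (if l = i then 1 else 0) * A k l) = (if k = i then A i i else 0)"
    by (case_tac "k = i") (auto simp: if_distrib[where f="\<lambda>c. c * _"] cong: if_cong)
  thus ?thesis by simp
qed
lemma t2: fixes D :: "'n::finite \<Rightarrow> 'n \<Rightarrow> real"
  shows "(\<Sum>j\<in>UNIV. w i * w j * ((if i = j then c else 0) - D i j)) = c * (w i)\<^sup>2 - (\<Sum>j\<in>UNIV. w i * w j * D i j)"
proof -
  have "\<And>j. w i * w j * ((if i = j then c else 0) - D i j) = (if j = i then c * (w i)\<^sup>2 else 0) - w i * w j * D i j"
    by (auto simp: power2_eq_square algebra_simps)
  thus ?thesis by (simp add: sum_subtractf)
qed
lemma t3: "(norm (z::real^'m::finite))\<^sup>2 = (\<Sum>j\<in>UNIV. (z$j)\<^sup>2)"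
  by (simp only: power2_norm_eq_inner) (simp add: inner_vec_def power2_eq_square)

theorem mainTheorem7:
  fixes u :: "real^'m::finite \<Rightarrow> real" and C r \<alpha> :: real
  assumes "smooth u"
    and "graphical_translator u"
    and "C > 0" and "r > 0"
    and "\<forall>x. norm x \<ge> r \<longrightarrow> \<bar>u x\<bar> \<le> C * norm x powr \<alpha>"
  shows "\<alpha> \<ge> 2"
proof (rule ccontr)
  assume "\<not> \<alpha> \<ge> 2"
  hence al: "\<alpha> < 2" by simp
  define m where "m = real CARD('m)"
  have mp: "m > 0" by (simp add: m_def)
  define \<epsilon> where "\<epsilon> = 1 / (4 * m)"
  have ep: "\<epsilon> > 0" using mp by (simp add: \<epsilon>_def)
  have em: "2 * \<epsilon> * m = 1/2" using mp by (simp add: \<epsilon>_def)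
  have du: "u differentiable (at x)" for x
  proof -
    have "(iter_partial [] u) differentiable_on UNIV" using assms(1) smooth_def by blast
    thus ?thesis by (simp add: iter_partial_def differentiable_on_def)
  qed
  have dg: "partial j u differentiable (at x)" for j x
  proof -
    have "(iter_partial [j] u) differentiable_on UNIV" using assms(1) smooth_def by blast
    thus ?thesis by (simp add: iter_partial_def differentiable_on_def)
  qed
  define f where "f = (\<lambda>x. u x - \<epsilon> * (norm x)\<^sup>2)"
  have cu: "continuous_on UNIV u"
    using du by (simp add: differentiable_imp_continuous_within continuous_at_imp_continuous_on)
  have cf: "continuous_on UNIV f" unfolding f_def using cu by (intro continuous_intros)
  obtain T where T: "T \<ge> 1" "\<forall>t\<ge>T. C * t powr \<alpha> - \<epsilon> * t\<^sup>2 < f 0"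
    using growth[OF assms(3) al ep] by blast
  have far: "\<forall>x. norm x \<ge> max r T \<longrightarrow> f x < f 0"
  proof (intro allI impI)
    fix x :: "real^'m" assume "norm x \<ge> max r T"
    hence n: "norm x \<ge> r" "norm x \<ge> T" by auto
    have "\<bar>u x\<bar> \<le> C * norm x powr \<alpha>" using assms(5) n(1) by blast
    hence "u x \<le> C * norm x powr \<alpha>" by linarith
    moreover have "C * norm x powr \<alpha> - \<epsilon> * (norm x)\<^sup>2 < f 0" using T(2) n(2) by blast
    ultimately have "u x \<le> C * norm x powr \<alpha>" "C * norm x powr \<alpha> - \<epsilon> * (norm x)\<^sup>2 < f 0" by auto
    thus "f x < f 0" unfolding f_def by linarith
  qed
  obtain x0 where x0: "\<forall>x. f x \<le> f x0" using attains_max[OF cf far] by blast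
  define D where "D = (\<lambda>i j. partial i (partial j u) x0)"
  define v where "v = (\<lambda>j. partial j u x0)"
  have maxin: "(\<Sum>i\<in>UNIV. \<Sum>j\<in>UNIV. w$i * w$j * D i j) \<le> 2 * \<epsilon> * (\<Sum>i\<in>UNIV. (w$i)\<^sup>2)" for w :: "real^'m"
  proof -
    define h where "h = (\<lambda>t. f (x0 + t *\<^sub>R w))"
    define h1 where "h1 = (\<lambda>t. (\<Sum>j\<in>UNIV. w$j * partial j u (x0 + t *\<^sub>R w)) - \<epsilon> * (2 * (x0 \<bullet> w) + 2 * t * (w \<bullet> w)))"
    have hh: "h = (\<lambda>t. u (x0 + t *\<^sub>R w) - \<epsilon> * (x0 \<bullet> x0 + 2 * t * (x0 \<bullet> w) + t\<^sup>2 * (w \<bullet> w)))"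
    proof -
      have "(norm (x0 + t *\<^sub>R w))\<^sup>2 = x0 \<bullet> x0 + 2 * t * (x0 \<bullet> w) + t\<^sup>2 * (w \<bullet> w)" for t
        by (simp only: power2_norm_eq_inner) (simp add: inner_add_left inner_add_right inner_commute power2_eq_square algebra_simps)
      thus ?thesis unfolding h_def f_def by simp
    qed
    have dh: "\<forall>t. (h has_real_derivative h1 t) (at t)"
    proof
      fix t
      have "((\<lambda>t. u (x0 + t *\<^sub>R w)) has_real_derivative (\<Sum>i\<in>UNIV. w$i * partial i u (x0 + t *\<^sub>R w))) (at t)"
        by (rule dir_chain) (rule du)
      thus "(h has_real_derivative h1 t) (at t)" unfolding hh h1_def
        by (auto intro!: derivative_eq_intros simp: algebra_simps)
    qed
    have dj: "((\<lambda>t. partial j u (x0 + t *\<^sub>R w)) has_real_derivative (\<Sum>i\<in>UNIV. w$i * D i j)) (at 0)" for j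
      using dir_chain[of "partial j u" x0 0 w] dg unfolding D_def by simp
    have dh1: "(h1 has_real_derivative ((\<Sum>j\<in>UNIV. w$j * (\<Sum>i\<in>UNIV. w$i * D i j)) - \<epsilon> * (2 * (w \<bullet> w)))) (at 0)"
      unfolding h1_def
      apply (auto intro!: derivative_eq_intros DERIV_sum dj)
      by (intro sum.cong) (simp_all add: mult.commute)
    have "(\<Sum>j\<in>UNIV. w$j * (\<Sum>i\<in>UNIV. w$i * D i j)) - \<epsilon> * (2 * (w \<bullet> w)) \<le> 0"
      by (rule second_deriv_test[OF dh dh1]) (use x0 in \<open>simp add: h_def\<close>)
    moreover have "(\<Sum>j\<in>UNIV. w$j * (\<Sum>i\<in>UNIV. w$i * D i j)) = (\<Sum>i\<in>UNIV. \<Sum>j\<in>UNIV. w$i * w$j * D i j)"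
      by (subst sum.swap) (simp add: sum_distrib_left ac_simps)
    moreover have "w \<bullet> w = (\<Sum>i\<in>UNIV. (w$i)\<^sup>2)" by (simp add: inner_vec_def power2_eq_square)
    ultimately show ?thesis by (simp add: algebra_simps)
  qed
  define A where "A = (\<lambda>i j. (if i = j then 2 * \<epsilon> else 0) - D i j)"
  have psd: "\<forall>w::'m\<Rightarrow>real. 0 \<le> (\<Sum>i\<in>UNIV. \<Sum>j\<in>UNIV. w i * w j * A i j)"
  proof
    fix w :: "'m \<Rightarrow> real"
    have "(\<Sum>i\<in>UNIV. \<Sum>j\<in>UNIV. w i * w j * A i j) = (\<Sum>i\<in>UNIV. 2 * \<epsilon> * (w i)\<^sup>2 - (\<Sum>j\<in>UNIV. w i * w j * D i j))"
      unfolding A_def by (simp add: t2)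
    also have "\<dots> = 2 * \<epsilon> * (\<Sum>i\<in>UNIV. (w i)\<^sup>2) - (\<Sum>i\<in>UNIV. \<Sum>j\<in>UNIV. w i * w j * D i j)"
      by (simp add: sum_subtractf sum_distrib_left)
    finally show "0 \<le> (\<Sum>i\<in>UNIV. \<Sum>j\<in>UNIV. w i * w j * A i j)"
      using maxin[of "\<chi> k. w k"] by simp
  qed
  have Dii: "D i i \<le> 2 * \<epsilon>" for i
  proof -
    have "0 \<le> (\<Sum>k\<in>UNIV. \<Sum>l\<in>UNIV. (if k = i then 1 else 0) * (if l = i then 1 else 0) * A k l)"
      using psd[rule_format, of "\<lambda>k. if k = i then 1 else 0"] by simp
    thus ?thesis by (simp only: t1) (simp add: A_def)
  qed
  define trD where "trD = (\<Sum>i\<in>UNIV. D i i)"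
  define S where "S = (\<Sum>i\<in>UNIV. (v i)\<^sup>2)"
  define Q where "Q = (\<Sum>i\<in>UNIV. \<Sum>j\<in>UNIV. v i * v j * D i j)"
  have trD: "trD \<le> 1/2"
  proof -
    have "trD \<le> (\<Sum>i\<in>(UNIV::'m set). 2 * \<epsilon>)" unfolding trD_def by (intro sum_mono Dii)
    hence "trD \<le> 2 * \<epsilon> * m" by (simp add: m_def ac_simps)
    thus ?thesis using em by linarith
  qed
  have Sp: "S \<ge> 0" unfolding S_def by (simp add: sum_nonneg)
  have pb: "(\<Sum>i\<in>UNIV. \<Sum>j\<in>UNIV. v i * v j * A i j) \<le> S * (\<Sum>i\<in>UNIV. A i i)"
    unfolding S_def by (rule psd_bound[OF psd])
  have pbl: "(\<Sum>i\<in>UNIV. \<Sum>j\<in>UNIV. v i * v j * A i j) = 2 * \<epsilon> * S - Q"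
  proof -
    have "(\<Sum>i\<in>UNIV. \<Sum>j\<in>UNIV. v i * v j * A i j) = (\<Sum>i\<in>UNIV. 2 * \<epsilon> * (v i)\<^sup>2 - (\<Sum>j\<in>UNIV. v i * v j * D i j))"
      unfolding A_def by (simp add: t2)
    also have "\<dots> = 2 * \<epsilon> * S - Q"
      by (simp add: sum_subtractf sum_distrib_left S_def Q_def)
    finally show ?thesis .
  qed
  have pbr: "(\<Sum>i\<in>UNIV. A i i) = 1/2 - trD"
    using em by (simp add: A_def sum_subtractf trD_def m_def ac_simps)
  have key: "2 * \<epsilon> * S - Q \<le> S * (1/2 - trD)" using pb pbl pbr by simp
  define W where "W = sqrt (1 + S)"
  have Wp: "W > 0" using Sp by (simp add: W_def)
  have W2: "W\<^sup>2 = 1 + S" using Sp by (simp add: W_def)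
  have comp: "partial i (\<lambda>y. ((1 / sqrt (1 + (norm (grad u y))\<^sup>2)) *\<^sub>R grad u y) $ i) x0
      = D i i / W - v i * (\<Sum>j\<in>UNIV. v j * D i j) / W ^ 3" for i
  proof -
    define G where "G = (\<lambda>j t. partial j u (x0 + t *\<^sub>R axis i 1))"
    have fe: "(\<lambda>t. ((1 / sqrt (1 + (norm (grad u (x0 + t *\<^sub>R axis i 1)))\<^sup>2)) *\<^sub>R grad u (x0 + t *\<^sub>R axis i 1)) $ i)
       = (\<lambda>t. (1 / sqrt (1 + (\<Sum>j\<in>UNIV. (G j t)\<^sup>2))) * G i t)"
      by (rule ext) (simp add: t3 grad_def G_def)
    have "((\<lambda>t. (1 / sqrt (1 + (\<Sum>j\<in>UNIV. (G j t)\<^sup>2))) * G i t) has_real_derivative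
     (D i i / sqrt (1 + (\<Sum>j\<in>UNIV. (G j 0)\<^sup>2)) - G i 0 * (\<Sum>j\<in>UNIV. G j 0 * D i j) / (sqrt (1 + (\<Sum>j\<in>UNIV. (G j 0)\<^sup>2)))^3)) (at 0)"
      by (rule comp_deriv) (unfold G_def D_def, rule axis_deriv, rule dg)
    moreover have "G j 0 = v j" for j by (simp add: G_def v_def)
    ultimately have "((\<lambda>t. (1 / sqrt (1 + (\<Sum>j\<in>UNIV. (G j t)\<^sup>2))) * G i t) has_real_derivative
       D i i / W - v i * (\<Sum>j\<in>UNIV. v j * D i j) / W ^ 3) (at 0)"
      by (simp add: W_def S_def)
    thus ?thesis unfolding partial_def fe by (rule DERIV_imp_deriv)
  qed
  have F1: "divergence (\<lambda>y. (1 / sqrt (1 + (norm (grad u y))\<^sup>2)) *\<^sub>R grad u y) x0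
         = 1 / sqrt (1 + (norm (grad u x0))\<^sup>2)"
    using assms(2) unfolding graphical_translator_def by blast
  have F2: "sqrt (1 + (norm (grad u x0))\<^sup>2) = W"
    by (simp add: t3 grad_def W_def S_def v_def)
  have "(\<Sum>i\<in>UNIV. D i i / W - v i * (\<Sum>j\<in>UNIV. v j * D i j) / W ^ 3) = 1 / W"
    using F1 unfolding divergence_def comp F2 .
  moreover have "(\<Sum>i\<in>UNIV. D i i / W - v i * (\<Sum>j\<in>UNIV. v j * D i j) / W ^ 3) = trD / W - Q / W ^ 3"
    by (simp add: sum_subtractf sum_divide_distrib sum_distrib_left trD_def Q_def ac_simps)
  ultimately have "trD / W - Q / W ^ 3 = 1 / W" by simp
  hence "Q * W + W * (W * W) = W * (W * (W * trD))" using Wp by (simp add: field_simps power3_eq_cube)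
  hence "W * (Q + W * W) = W * (W * W * trD)" by (simp add: algebra_simps)
  hence "Q + W * W = W * W * trD" using Wp by simp
  hence "trD * W\<^sup>2 - Q = W\<^sup>2" by (simp add: power2_eq_square algebra_simps)
  hence eq: "trD + trD * S - Q = 1 + S" using W2 by (simp add: algebra_simps)
  have "2 * \<epsilon> * S \<ge> 0" using ep Sp by simp
  moreover have key2: "2 * \<epsilon> * S - Q \<le> S / 2 - S * trD" using key by (simp add: right_diff_distrib)
  moreover have "trD * S = S * trD" by (rule mult.commute)
  ultimately show False using eq trD Sp by linarith
qed

end
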